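(* Let $\tau\ge1$ be an integer, $h(z;\lambda)=z^{\tau+1}-z^{\tau}+\lambda$, $\bar\lambda_\tau=2\sin\!\left(\frac{\pi}{2}\cdot\frac{1}{2\tau+1}\right)$, and $\rho(\lambda)=\max\{|z|: z\in\mathbb C,\ h(z;\lambda)=0\}$. Then there exists $\lambda_{\mathrm{th}}\in[0,\bar\lambda_\tau]$ such that $\rho$ is decreasing on $(0,\lambda_{\mathrm{th}})$ and increasing on $(\lambda_{\mathrm{th}},\bar\lambda_\tau)$. Consequently, if $K\in\mathbb R^{N\times N}$ is symmetric with eigenvalues $0=\lambda_1<\lambda_2\le\dots\le\lambda_N<\bar\lambda_\tau$, then the convergence rate $R=\max\{\rho(\lambda):\lambda\in\operatorname{spec}(K)\setminus\{0\}\}$ of $x(k+1)=x(k)-Kx(k-\tau)$ satisfies $R=\max\{\rho(\lambda_2),\rho(\lambda_N)\}$.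
   Context: The convergence rate of the delayed consensus dynamics $x(k+1)=x(k)-Kx(k-\tau)$ is defined as the second largest eigenvalue modulus of the augmented delay-free state matrix, whose spectrum is the union over eigenvalues $\lambda$ of $K$ of the roots of $h(z;\lambda)$; the eigenvalue $0$ of $K$ contributes the root $z=1$ (and $z=0$ with multiplicity $\tau$), which is excluded. *)

theory Defs
  imports "HOL-Analysis.Analysis" "HOL-Computational_Algebra.Polynomial"
begin

definition hpoly :: "nat \<Rightarrow> real \<Rightarrow> complex poly" where
  "hpoly tau lam = monom 1 (tau + 1) - monom 1 tau + [:complex_of_real lam:]"

definition rho :: "nat \<Rightarrow> real \<Rightarrow> real" where
  "rho tau lam = Max ((\<lambda>z. cmod z) ` {z. poly (hpoly tau lam) z = 0})"

definition lambda_bar :: "nat \<Rightarrow> real" where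
  "lambda_bar tau = 2 * sin (pi / 2 * (1 / (2 * real tau + 1)))"

definition mat_spec :: "real^'n^'n \<Rightarrow> real set" where
  "mat_spec K = {l. \<exists>v. v \<noteq> 0 \<and> K *v v = l *\<^sub>R v}"

text \<open>Convergence rate of x(k+1) = x(k) - K x(k - tau).\<close>
definition conv_rate :: "nat \<Rightarrow> real^'n^'n \<Rightarrow> real" where
  "conv_rate tau K = Max (rho tau ` (mat_spec K - {0}))"

end

theory Submission
  imports Defs
begin


lemma poly_hpoly: "poly (hpoly tau lam) z = z^(tau+1) - z^tau + complex_of_real lam"
  by (simp add: hpoly_def poly_monom)

lemma hpoly_nz: "hpoly tau lam \<noteq> 0"
proof
  assume "hpoly tau lam = 0"
  then have "coeff (hpoly tau lam) (tau+1) = 0" by simp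
  moreover have "coeff (hpoly tau lam) (tau+1) = 1"
    by (simp add: hpoly_def coeff_monom)
  ultimately show False by simp
qed

lemma rho_eqI:
  assumes "poly (hpoly tau lam) z0 = 0" "cmod z0 = r"
    "\<And>z. poly (hpoly tau lam) z = 0 \<Longrightarrow> cmod z \<le> r"
  shows "rho tau lam = r"
proof -
  have fin: "finite {z. poly (hpoly tau lam) z = 0}"
    by (rule poly_roots_finite[OF hpoly_nz])
  show ?thesis unfolding rho_def
    by (rule Max_eqI) (use fin assms in auto)
qed

lemma dom1:
  fixes r :: real and z :: complex
  assumes tau: "tau \<ge> 1" and r: "real tau / (tau+1) \<le> r" "r < 1"
    and lam: "lam = r^tau * (1 - r)"
    and root: "poly (hpoly tau lam) z = 0"
  shows "cmod z \<le> r"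
proof (rule ccontr)
  assume "\<not> cmod z \<le> r"
  hence zr: "cmod z > r" by simp
  have rpos: "r > 0" using r tau
    by (smt (verit, del_insts) divide_pos_pos of_nat_0_less_iff of_nat_1 of_nat_add less_le_trans
        One_nat_def Suc_le_eq)
  define S where "S = (\<Sum>i<tau. complex_of_real r ^ (tau - Suc i) * z ^ i)"
  have ps: "z^tau - complex_of_real r ^ tau = (z - r) * S"
    unfolding S_def by (rule power_diff_sumr2)
  have eq0: "z^(tau+1) - z^tau + complex_of_real (r^tau*(1-r)) = 0"
    using root lam by (simp add: poly_hpoly)
  have "(z - r) * (z^tau - (1 - r) * S) = z^(tau+1) - z^tau + complex_of_real (r^tau*(1-r))"
  proof -
    have "(z - r) * (z^tau - (1 - r) * S) = z * z^tau - r * z^tau - (1-r) * ((z - r) * S)"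
      by (simp add: algebra_simps)
    also have "\<dots> = z * z^tau - r * z^tau - (1-r) * (z^tau - complex_of_real r ^ tau)"
      by (simp add: ps)
    also have "\<dots> = z^(tau+1) - z^tau + complex_of_real (r^tau*(1-r))"
      by (simp add: algebra_simps)
    finally show ?thesis .
  qed
  with eq0 have "(z - r) * (z^tau - (1 - r) * S) = 0" by simp
  moreover have "z \<noteq> complex_of_real r" using zr rpos by auto
  ultimately have zt: "z^tau = (1 - r) * S" by simp
  have "cmod S \<le> (\<Sum>i<tau. r ^ (tau - Suc i) * cmod z ^ i)"
    unfolding S_def by (rule order_trans[OF norm_sum]) (simp add: norm_mult norm_power abs_of_pos[OF rpos])
  also have "\<dots> \<le> (\<Sum>i<tau. cmod z ^ (tau - Suc i) * cmod z ^ i)"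
    by (intro sum_mono mult_right_mono power_mono) (use zr rpos in auto)
  also have "\<dots> = (\<Sum>i<tau. cmod z ^ (tau - 1))"
    by (intro sum.cong refl) (simp add: power_add[symmetric])
  also have "\<dots> = tau * cmod z ^ (tau - 1)" by simp
  finally have Sb: "cmod S \<le> tau * cmod z ^ (tau - 1)" .
  have "cmod z ^ tau = cmod (complex_of_real (1 - r)) * cmod S"
    by (metis norm_mult norm_power of_real_1 of_real_diff zt)
  also have "cmod (complex_of_real (1 - r)) = 1 - r" using r by (simp only: norm_of_real)
  finally have "cmod z ^ tau = (1 - r) * cmod S" .
  then have "cmod z ^ tau = (1 - r) * cmod S" .
  also have "\<dots> \<le> (1 - r) * (tau * cmod z ^ (tau - 1))"
    using Sb r by (intro mult_left_mono) auto
  finally have A: "cmod z * cmod z ^ (tau - 1) \<le> ((1 - r) * tau) * cmod z ^ (tau - 1)"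
    using tau by (cases tau) (auto simp: algebra_simps)
  have "cmod z ^ (tau - 1) > 0" using zr rpos by (intro zero_less_power) linarith
  with A have "cmod z \<le> (1 - r) * tau" by simp
  moreover have "(1 - r) * tau \<le> r" using r by (simp add: field_simps)
  ultimately show False using zr by simp
qed



definition c0 :: "nat \<Rightarrow> real" where "c0 tau = real tau ^ tau / (real tau + 1) ^ (tau + 1)"

lemma f_decr:
  fixes x y :: real
  assumes tau: "tau \<ge> 1" and xy: "real tau / (tau+1) \<le> x" "x < y" "y \<le> 1"
  shows "y^tau * (1 - y) < x^tau * (1 - x)"
proof -
  have x0pos: "real tau / (tau+1) > 0" using tau by simp
  have "(\<lambda>t. - (t^tau * (1 - t))) x < (\<lambda>t. - (t^tau * (1 - t))) y"
  proof (rule DERIV_pos_imp_increasing_open[OF xy(2)])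
    fix t assume t: "x < t" "t < y"
    have tpos: "t > 0" using t xy x0pos by linarith
    have "((\<lambda>t. - (t^tau * (1 - t))) has_real_derivative
            - ((real tau * t^(tau-1)) * (1 - t) + t^tau * (-1))) (at t)"
      by (auto intro!: derivative_eq_intros)
    moreover have "- ((real tau * t^(tau-1)) * (1 - t) + t^tau * (-1)) = t^(tau-1) * ((tau+1)*t - tau)"
    proof -
      have "t^tau = t * t^(tau-1)" using tau by (cases tau) auto
      then show ?thesis by (simp add: algebra_simps)
    qed
    moreover have "t^(tau-1) * ((tau+1)*t - tau) > 0"
    proof -
      have "real tau \<le> (tau+1) * x" using xy by (simp add: field_simps)
      moreover have "(tau+1) * x < (tau+1) * t" using t by (intro mult_strict_left_mono) auto
      ultimately have "real tau < (tau+1) * t" by linarith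
      then show ?thesis using tpos by simp
    qed
    ultimately show "\<exists>d. ((\<lambda>t. - (t^tau * (1 - t))) has_real_derivative d) (at t) \<and> 0 < d"
      by auto
  next
    show "continuous_on {x..y} (\<lambda>t. - (t^tau * (1 - t)))" by (intro continuous_intros)
  qed
  then show ?thesis by simp
qed

lemma f_x0: "(real tau / (tau+1))^tau * (1 - real tau / (tau+1)) = c0 tau"
proof -
  have "1 - real tau / (tau+1) = 1 / (tau + 1)" by (simp add: field_simps)
  then show ?thesis by (simp add: c0_def power_divide field_simps)
qed

lemma regime1_root:
  assumes tau: "tau \<ge> 1" and lam: "0 < lam" "lam \<le> c0 tau"
  shows "\<exists>r. real tau / (tau+1) \<le> r \<and> r < 1 \<and> lam = r^tau * (1 - r)"
proof -
  have "\<exists>x\<ge>real tau / (tau+1). x \<le> 1 \<and> x^tau * (1 - x) = lam"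
    by (rule IVT2'[of "\<lambda>x. x^tau * (1 - x)"]) (use lam f_x0[of tau] in \<open>auto intro!: continuous_intros\<close>)
  then obtain r where r: "real tau / (tau+1) \<le> r" "r \<le> 1" "r^tau * (1 - r) = lam" by auto
  have "r \<noteq> 1" using r lam by auto
  with r show ?thesis by auto
qed

lemma regime1_rho:
  assumes tau: "tau \<ge> 1" and r: "real tau / (tau+1) \<le> r" "r < 1" and lam: "lam = r^tau * (1 - r)"
  shows "rho tau lam = r"
proof (rule rho_eqI[of tau lam "complex_of_real r"])
  show "poly (hpoly tau lam) (complex_of_real r) = 0"
    by (simp add: poly_hpoly lam algebra_simps)
  have "r \<ge> 0" using r(1) by (smt (verit) divide_nonneg_nonneg of_nat_0_le_iff)
  then show "cmod (complex_of_real r) = r" by simp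
  show "\<And>z. poly (hpoly tau lam) z = 0 \<Longrightarrow> cmod z \<le> r"
    using dom1[OF tau r lam] by blast
qed

lemma regime1_mono:
  assumes tau: "tau \<ge> 1" and ab: "0 < a" "a < b" "b \<le> c0 tau"
  shows "rho tau b < rho tau a"
proof -
  obtain ra where ra: "real tau / (tau+1) \<le> ra" "ra < 1" "a = ra^tau * (1 - ra)"
    using regime1_root[OF tau, of a] ab by auto
  obtain rb where rb: "real tau / (tau+1) \<le> rb" "rb < 1" "b = rb^tau * (1 - rb)"
    using regime1_root[OF tau, of b] ab by auto
  have "rb < ra"
  proof (rule ccontr)
    assume "\<not> rb < ra"
    then have "ra < rb \<or> ra = rb" by auto
    then show False
    proof
      assume "ra < rb"
      then have "rb^tau * (1 - rb) < ra^tau * (1 - ra)" using f_decr[OF tau ra(1) _ ] rb by auto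
      then show False using ra rb ab by simp
    next
      assume "ra = rb" then show False using ra rb ab by simp
    qed
  qed
  then show ?thesis using regime1_rho[OF tau ra] regime1_rho[OF tau rb] by simp
qed

lemma rho_c0: assumes tau: "tau \<ge> 1" shows "rho tau (c0 tau) = real tau / (tau+1)"
  by (rule regime1_rho[OF tau]) (use f_x0[of tau] in \<open>auto simp: field_simps\<close>)

lemma rho_regime1_gt:
  assumes tau: "tau \<ge> 1" and a: "0 < a" "a < c0 tau"
  shows "rho tau a > real tau / (tau+1)"
  using regime1_mono[OF tau a order.refl] rho_c0[OF tau] by simp



primrec Pp :: "(nat \<Rightarrow> real) \<Rightarrow> nat \<Rightarrow> complex \<Rightarrow> complex" where
  "Pp b 0 y = 0"
| "Pp b (Suc n) y = y * Pp b n y + complex_of_real (b n)"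

lemma EK_aux:
  fixes b :: "nat \<Rightarrow> real" and y :: complex
  assumes b0: "b 0 = 1" and mono: "\<And>m. m + 1 < n \<Longrightarrow> b (m+1) \<le> b m"
    and n: "n \<ge> 1" and y: "cmod y \<ge> 1"
  shows "cmod ((y - 1) * Pp b n y - y^n + b (n-1)) \<le> (1 - b (n-1)) * cmod y ^ (n-1)"
  using n mono
proof (induction n rule: dec_induct)
  case base
  then show ?case using b0 by (simp add: algebra_simps)
next
  case (step n)
  have IH: "cmod ((y - 1) * Pp b n y - y^n + b (n-1)) \<le> (1 - b (n-1)) * cmod y ^ (n-1)"
    using step by auto
  have mon: "b n \<le> b (n-1)" using step.prems[of "n-1"] step.hyps by auto
  have eq: "(y - 1) * Pp b (Suc n) y - y^(Suc n) + b (Suc n - 1)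
        = y * (((y - 1) * Pp b n y - y^n + b (n-1)) + complex_of_real (b n - b (n-1)))"
    by (simp add: algebra_simps)
  have "cmod ((y - 1) * Pp b (Suc n) y - y^(Suc n) + b (Suc n - 1))
       \<le> cmod y * (cmod ((y - 1) * Pp b n y - y^n + b (n-1)) + (b (n-1) - b n))"
    unfolding eq norm_mult
  proof (intro mult_left_mono order_trans[OF norm_triangle_ineq] add_left_mono)
    have "complex_of_real (b n - b (n-1)) = complex_of_real (b n) - complex_of_real (b (n-1))" by simp
    show "cmod (complex_of_real (b n - b (n-1))) \<le> b (n-1) - b n"
      using mon by (simp only: norm_of_real)
  qed simp
  also have "\<dots> \<le> cmod y * ((1 - b (n-1)) * cmod y ^ (n-1) + (b (n-1) - b n) * cmod y ^ (n-1))"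
  proof -
    have "1 \<le> cmod y ^ (n-1)" using y by (simp add: one_le_power)
    then have "(b (n-1) - b n) \<le> (b (n-1) - b n) * cmod y ^ (n-1)"
      using mon by (simp add: mult_le_cancel_left1)
    then show ?thesis using IH by (intro mult_left_mono) auto
  qed
  also have "\<dots> = (1 - b (Suc n - 1)) * cmod y ^ (Suc n - 1)"
    using step.hyps by (cases n) (auto simp: algebra_simps)
  finally show ?case .
qed

lemma EK:
  fixes b :: "nat \<Rightarrow> real" and y :: complex
  assumes b0: "b 0 = 1" and mono: "\<And>m. m + 1 < n \<Longrightarrow> b (m+1) \<le> b m"
    and bn: "b (n-1) \<ge> 0" and n: "n \<ge> 1" and y: "cmod y > 1"
  shows "Pp b n y \<noteq> 0"
proof
  assume P0: "Pp b n y = 0"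
  have h1: "cmod ((y - 1) * Pp b n y - y^n + b (n-1)) \<le> (1 - b (n-1)) * cmod y ^ (n-1)"
    using EK_aux[OF b0 mono n] y by simp
  have h2: "(y - 1) * Pp b n y - y^n + b (n-1) = complex_of_real (b (n-1)) - y^n"
    using P0 by simp
  have "cmod (complex_of_real (b (n-1)) - y^n) \<le> (1 - b (n-1)) * cmod y ^ (n-1)"
    using h1 unfolding h2 .
  moreover have "cmod y ^ n - b (n-1) \<le> cmod (complex_of_real (b (n-1)) - y^n)"
  proof -
    have "cmod (y^n) \<le> cmod (complex_of_real (b (n-1)) - y^n) + cmod (complex_of_real (b (n-1)))"
      using norm_triangle_ineq4[of "complex_of_real (b (n-1))" "complex_of_real (b (n-1)) - y^n"]
      by simp
    then show ?thesis using bn by (simp add: norm_power)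
  qed
  moreover have "(1 - b (n-1)) * cmod y ^ (n-1) = cmod y ^ (n-1) + b (n-1) * (1 - cmod y ^ (n-1)) - b (n-1)"
    by (simp add: algebra_simps)
  ultimately have A: "cmod y ^ n \<le> cmod y ^ (n-1) + b (n-1) * (1 - cmod y ^ (n-1))"
    by linarith
  have "1 \<le> cmod y ^ (n-1)" using y by (simp add: one_le_power)
  then have "b (n-1) * (1 - cmod y ^ (n-1)) \<le> 0" using bn by (simp add: mult_nonneg_nonpos)
  with A have "cmod y ^ n \<le> cmod y ^ (n-1)" by simp
  moreover have "cmod y ^ (n-1) < cmod y ^ n" using y n by (intro power_strict_increasing) auto
  ultimately show False by simp
qed

lemma Pp_ident:
  fixes b :: "nat \<Rightarrow> real" and y :: complex and c q :: real
  assumes b0: "b 0 = 1" and b1: "b 1 = 2*c - q"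
    and rec: "\<And>m. b (m+2) = 2*c * b (m+1) - b m" and n: "n \<ge> 1"
  shows "(y^2 - 2*c*y + 1) * Pp b n y = y^(n+1) - q * y^n - b n * y + b (n-1)"
  using n
proof (induction n rule: dec_induct)
  case base
  have e: "complex_of_real (b (Suc 0)) = 2*c - q" by (metis b1 One_nat_def of_real_diff of_real_mult of_real_numeral)
  show ?case using b0 by (simp add: algebra_simps power2_eq_square e)
next
  case (step n)
  have r: "b (Suc n) = 2*c * b n - b (n-1)" using rec[of "n-1"] step.hyps
    by (cases n) auto
  have "(y^2 - 2*c*y + 1) * Pp b (Suc n) y = y * ((y^2 - 2*c*y + 1) * Pp b n y) + (y^2 - 2*c*y + 1) * b n"
    by (simp add: algebra_simps)
  also have "\<dots> = y * (y^(n+1) - q * y^n - b n * y + b (n-1)) + (y^2 - 2*c*y + 1) * b n"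
    using step.IH by simp
  also have "\<dots> = y^(Suc n+1) - q * y^(Suc n) - b (Suc n) * y + b (Suc n - 1)"
    by (simp add: r algebra_simps power2_eq_square)
  finally show ?case .
qed



lemma E_ident: fixes u v t :: real
  shows "sin(u+v)*(sin(u+t)-sin(u+2*t))+sin(u+v+t)*(sin(u+t)-sin u) = sin t*(sin v - sin(v-t))"
proof -
  have "sin(u+2*t) = sin(u+t+t)" by (simp add: algebra_simps)
  have c1: "cos (t*2 - v) = cos (v - t*2)" "cos (t - v) = cos (v - t)" by (metis cos_minus minus_diff_eq)+
  show ?thesis
    unfolding sin_times_sin right_diff_distrib \<open>sin(u+2*t) = sin(u+t+t)\<close>
    by (simp add: algebra_simps) (simp add: c1 field_simps)
qed

definition qq :: "nat \<Rightarrow> real \<Rightarrow> real" where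
  "qq t th = sin (real (t+1) * th) / sin (real t * th)"
definition bb :: "nat \<Rightarrow> real \<Rightarrow> nat \<Rightarrow> real" where
  "bb t th m = (sin (real (m+1) * th) - qq t th * sin (real m * th)) / sin th"
definition Rf :: "nat \<Rightarrow> real \<Rightarrow> real" where
  "Rf t th = sin (real t * th) / sin (real (t+1) * th)"
definition Lf :: "nat \<Rightarrow> real \<Rightarrow> real" where
  "Lf t th = Rf t th ^ t * sin th / sin (real (t+1) * th)"

lemma sin_rec: "sin (real (m+2) * th) = 2 * cos th * sin (real (m+1) * th) - sin (real m * th)"
proof -
  have a: "real (m+2) * th = real (m+1) * th + th" by (simp add: algebra_simps)
  have b: "real m * th = real (m+1) * th - th" by (simp add: algebra_simps)
  show ?thesis unfolding a b sin_add sin_diff by (simp add: algebra_simps)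
qed

lemma alg_rec: fixes A B C D c q S :: real
  shows "A = 2*c*B - C \<Longrightarrow> B = 2*c*C - D \<Longrightarrow> (A - q*B)/S = 2*c*((B - q*C)/S) - (C - q*D)/S"
proof -
  assume h1: "A = 2*c*B - C" and h2: "B = 2*c*C - D"
  have "A - q*B = 2*c*(B - q*C) - (C - q*D)" unfolding h1 h2 by (simp add: algebra_simps)
  then show ?thesis by (simp add: diff_divide_distrib right_diff_distrib)
qed

lemma bb_rec: "bb t th (m+2) = 2 * cos th * bb t th (m+1) - bb t th m"
proof -
  have i1: "m+2+1 = m+3" "m+1+1 = m+2" by simp_all
  have s1: "sin (real (m+3) * th) = 2 * cos th * sin (real (m+2) * th) - sin (real (m+1) * th)"
    using sin_rec[of "m+1" th] by (simp add: add.assoc numeral_3_eq_3 numeral_2_eq_2)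
  have s2: "sin (real (m+2) * th) = 2 * cos th * sin (real (m+1) * th) - sin (real m * th)"
    by (rule sin_rec)
  show ?thesis unfolding bb_def i1
    by (rule alg_rec[OF s1 s2])
qed

lemma bb0: "sin th \<noteq> 0 \<Longrightarrow> bb t th 0 = 1"
  by (simp add: bb_def)

lemma bb1: "sin th \<noteq> 0 \<Longrightarrow> bb t th 1 = 2 * cos th - qq t th"
proof -
  assume "sin th \<noteq> 0"
  moreover have "sin (real (1+1) * th) = 2 * sin th * cos th"
    using sin_double[of th] by simp
  ultimately show ?thesis by (simp add: bb_def field_simps)
qed

lemma bbt: "sin (real t * th) \<noteq> 0 \<Longrightarrow> bb t th t = 0"
  by (simp add: bb_def qq_def)

lemma theta_facts:
  assumes t: "t \<ge> 1" and th: "0 < th" "th \<le> pi / (2 * real t + 1)"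
  shows "sin th > 0" "sin (real t * th) > 0" "sin (real (t+1) * th) > 0"
    "real t * th < pi/2" "real (t+1) * th < pi"
proof -
  have tpos: "real t \<ge> 1" using t by simp
  have "real t * th \<le> real t * (pi / (2 * real t + 1))"
    using th by (intro mult_left_mono) auto
  also have "\<dots> < pi / 2" using tpos by (simp add: field_simps)
  finally show tl: "real t * th < pi/2" .
  have "real (t+1) * th \<le> real (t+1) * (pi / (2 * real t + 1))"
    using th by (intro mult_left_mono) auto
  also have "\<dots> < pi" using tpos by (simp add: field_simps)
  finally show tl2: "real (t+1) * th < pi" .
  have "th \<le> real t * th" using mult_right_mono[OF tpos, of th] th by simp
  then have "th < pi" using tl pi_gt_zero by linarith
  then show "sin th > 0" using th by (intro sin_gt_zero) auto
  have "real t * th > 0" using tpos th by simp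
  then show "sin (real t * th) > 0" using tl by (intro sin_gt_zero) auto
  show "sin (real (t+1) * th) > 0" using tl2 tpos th by (intro sin_gt_zero) auto
qed

lemma bb_mono:
  assumes t: "t \<ge> 1" and th: "0 < th" "th \<le> pi / (2 * real t + 1)" and m: "m < t"
  shows "bb t th (m+1) \<le> bb t th m"
proof -
  note tf = theta_facts[OF t th]
  define u where "u = real m * th"
  define v where "v = real (t - m) * th"
  have e1: "real t * th = u + v" using m by (simp add: u_def v_def algebra_simps of_nat_diff)
  have e2: "real (t+1) * th = u + v + th" using e1 by (simp add: algebra_simps)
  have e3: "real (m+1) * th = u + th" by (simp add: u_def algebra_simps)
  have e4: "real (m+1+1) * th = u + 2 * th" by (simp add: u_def algebra_simps)
  have "sin (real t * th) * (bb t th m - bb t th (m+1)) * sin th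
      = sin(u+v)*(sin(u+th)-sin(u+2*th))+sin(u+v+th)*(sin(u+th)-sin u)"
    using tf(1,2) unfolding bb_def qq_def e1 e2 e3 e4 u_def[symmetric]
    by (simp add: field_simps)
  also have "\<dots> = sin th * (sin v - sin (v - th))" by (rule E_ident)
  finally have "sin (real t * th) * (bb t th m - bb t th (m+1)) = sin v - sin (v - th)"
    using tf(1) by simp
  moreover have "sin (v - th) \<le> sin v"
  proof (rule sin_monotone_2pi_le)
    have "v \<ge> th" using m th by (simp add: v_def of_nat_diff)
    then show "- (pi/2) \<le> v - th" using pi_gt_zero by linarith
    show "v - th \<le> v" using th by simp
    have "v \<le> real t * th" using th by (simp add: v_def of_nat_diff)
    then show "v \<le> pi/2" using tf(4) by simp
  qed
  ultimately have "sin (real t * th) * (bb t th m - bb t th (m+1)) \<ge> 0" by simp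
  then show ?thesis using tf(2) by (simp add: zero_le_mult_iff)
qed



lemma sin_sq_ident: "sin (a::real) ^ 2 - sin (a - b) * sin (a + b) = sin b ^ 2"
proof -
  have d1: "sin (a - b) = sin a * cos b - cos a * sin b" by (rule sin_diff)
  have d2: "sin (a + b) = sin a * cos b + cos a * sin b" by (rule sin_add)
  have "sin (a - b) * sin (a + b) = sin a ^ 2 * cos b ^ 2 - cos a ^ 2 * sin b ^ 2"
    unfolding d1 d2 by (simp add: power2_eq_square algebra_simps)
  also have "\<dots> = sin a ^ 2 - sin b ^ 2"
    by (simp add: cos_squared_eq algebra_simps)
  finally show ?thesis by simp
qed

lemma Lf_eq:
  assumes t: "t \<ge> 1" and th: "0 < th" "th \<le> pi / (2 * real t + 1)"
  shows "Lf t th = Rf t th ^ (t+1) * bb t th (t-1)"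
proof -
  note tf = theta_facts[OF t th]
  define A where "A = real t * th"
  have a1: "real (t+1) * th = A + th" by (simp add: A_def algebra_simps)
  have a2: "real (t - 1 + 1) * th = A" using t by (simp add: A_def)
  have a3: "real (t - 1) * th = A - th" using t by (simp add: A_def of_nat_diff algebra_simps)
  have sA: "sin A > 0" using tf(2) by (simp add: A_def)
  have sB: "sin (A + th) > 0" using tf(3) a1 by simp
  have id: "sin A ^ 2 - sin (A - th) * sin (A + th) = sin th ^ 2" by (rule sin_sq_ident)
  have h: "Rf t th * bb t th (t-1) = sin th / sin (A + th)"
    unfolding Rf_def bb_def qq_def a1 a2 a3 A_def[symmetric]
    using sA sB tf(1) id by (simp add: field_simps power2_eq_square)
  have eq: "Rf t th ^ (t+1) * bb t th (t-1) = Rf t th ^ t * (Rf t th * bb t th (t-1))"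
    by (simp add: power_Suc2 mult.assoc)
  show ?thesis unfolding Lf_def a1 by (simp only: eq h) simp
qed

lemma quad_factor: "y^2 - 2 * complex_of_real (cos th) * y + 1 = (y - cis th) * (y - cis (-th))"
proof -
  have "cis th + cis (-th) = 2 * complex_of_real (cos th)"
    by (simp add: complex_eq_iff)
  moreover have "cis th * cis (-th) = 1" by (simp add: cis_mult)
  ultimately show ?thesis by (simp add: algebra_simps power2_eq_square)
    (metis (no_types, lifting) add.commute distrib_left mult.commute)
qed

lemma hfactor:
  assumes t: "t \<ge> 1" and th: "0 < th" "th \<le> pi / (2 * real t + 1)"
  shows "poly (hpoly t (Lf t th)) z =
     complex_of_real (Rf t th) ^ (t+1) *
       (((z / Rf t th)^2 - 2 * complex_of_real (cos th) * (z / Rf t th) + 1) * Pp (bb t th) t (z / Rf t th))"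
proof -
  note tf = theta_facts[OF t th]
  define r where "r = Rf t th"
  have rpos: "r > 0" using tf(2,3) by (simp add: r_def Rf_def)
  have qr: "qq t th * r = 1" using tf(2,3) by (simp add: r_def Rf_def qq_def)
  define y where "y = z / complex_of_real r"
  have z: "z = complex_of_real r * y" using rpos by (simp add: y_def)
  have sn: "sin th \<noteq> 0" using tf(1) by simp
  have "((y)^2 - 2 * complex_of_real (cos th) * y + 1) * Pp (bb t th) t y
      = y^(t+1) - qq t th * y^t - bb t th t * y + bb t th (t-1)"
    using Pp_ident[OF bb0[OF sn, of t] bb1[OF sn, of t] bb_rec[of t th] t, where y=y] by simp
  also have "\<dots> = y^(t+1) - qq t th * y^t + bb t th (t-1)"
    using bbt[of t th] tf(2) by simp
  finally have P: "((y)^2 - 2 * complex_of_real (cos th) * y + 1) * Pp (bb t th) t y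
      = y^(t+1) - qq t th * y^t + bb t th (t-1)" .
  have L: "Lf t th = r ^ (t+1) * bb t th (t-1)" using Lf_eq[OF t th] by (simp add: r_def)
  have "complex_of_real r ^ (t+1) * (y^(t+1) - qq t th * y^t + bb t th (t-1))
      = (r*y)^(t+1) - complex_of_real (qq t th * r) * (r * y)^t + complex_of_real (r ^ (t+1) * bb t th (t-1))"
    by (simp add: algebra_simps power_mult_distrib)
  also have "\<dots> = poly (hpoly t (Lf t th)) z"
    unfolding qr L poly_hpoly z by simp
  finally show ?thesis using P by (simp add: y_def r_def)
qed

lemma regime2_rho:
  assumes t: "t \<ge> 1" and th: "0 < th" "th \<le> pi / (2 * real t + 1)"
  shows "rho t (Lf t th) = Rf t th"
proof -
  note tf = theta_facts[OF t th]
  define r where "r = Rf t th"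
  have rpos: "r > 0" using tf(2,3) by (simp add: r_def Rf_def)
  have sn: "sin th \<noteq> 0" using tf(1) by simp
  show ?thesis
  proof (rule rho_eqI[of t _ "complex_of_real r * cis th"])
    show "poly (hpoly t (Lf t th)) (complex_of_real r * cis th) = 0"
      unfolding hfactor[OF t th] using rpos
      by (simp add: r_def[symmetric] quad_factor)
    show "cmod (complex_of_real r * cis th) = Rf t th" using rpos by (simp add: norm_mult r_def)
    fix z assume root: "poly (hpoly t (Lf t th)) z = 0"
    show "cmod z \<le> Rf t th"
    proof (rule ccontr)
      assume "\<not> cmod z \<le> Rf t th"
      then have zr: "cmod z > r" by (simp add: r_def)
      define y where "y = z / complex_of_real r"
      have ny: "cmod y > 1" using zr rpos by (simp add: y_def norm_divide)
      have q1: "y^2 - 2 * complex_of_real (cos th) * y + 1 \<noteq> 0"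
        unfolding quad_factor using ny by auto
      have b0: "bb t th 0 = 1" by (rule bb0[OF sn])
      have mono: "\<And>m. m + 1 < t \<Longrightarrow> bb t th (m+1) \<le> bb t th m"
        using bb_mono[OF t th] by simp
      have bt: "bb t th (t-1) \<ge> 0"
        using bb_mono[OF t th, of "t-1"] bbt[of t th] tf(2) t by simp
      have "Pp (bb t th) t y \<noteq> 0" by (rule EK[OF b0 mono bt t ny])
      with q1 rpos have "poly (hpoly t (Lf t th)) z \<noteq> 0"
        unfolding hfactor[OF t th] by (simp add: y_def r_def)
      with root show False by simp
    qed
  qed
qed



lemma abs_sin_mult_le:
  fixes x :: real assumes x: "0 < x" "x < pi"
  shows "\<bar>sin (real n * x)\<bar> \<le> real n * sin x"
proof (induction n)
  case 0 then show ?case by simp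
next
  case (Suc n)
  have sx: "sin x > 0" using x by (intro sin_gt_zero) auto
  have "sin (real (Suc n) * x) = sin (real n * x) * cos x + cos (real n * x) * sin x"
    by (simp add: distrib_right sin_add)
  then have "\<bar>sin (real (Suc n) * x)\<bar> \<le> \<bar>sin (real n * x)\<bar> * \<bar>cos x\<bar> + \<bar>cos (real n * x)\<bar> * sin x"
    using sx abs_triangle_ineq[of "sin (real n * x) * cos x" "cos (real n * x) * sin x"]
    by (simp add: abs_mult)
  also have "\<dots> \<le> \<bar>sin (real n * x)\<bar> + sin x"
  proof (rule add_mono)
    show "\<bar>sin (real n * x)\<bar> * \<bar>cos x\<bar> \<le> \<bar>sin (real n * x)\<bar>"
      by (rule mult_left_le) (auto simp: abs_cos_le_one)
    show "\<bar>cos (real n * x)\<bar> * sin x \<le> sin x"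
      by (rule mult_left_le_one_le) (use sx in \<open>auto simp: abs_cos_le_one\<close>)
  qed
  also have "\<dots> \<le> real (Suc n) * sin x" using Suc by (simp add: algebra_simps)
  finally show ?case .
qed

lemma abs_sin_mult_less:
  fixes x :: real assumes x: "0 < x" "x < pi" and n: "n \<ge> 2"
  shows "\<bar>sin (real n * x)\<bar> < real n * sin x"
  using n
proof (induction n rule: dec_induct)
  case base
  have sx: "sin x > 0" using x by (intro sin_gt_zero) auto
  have "cos x ^ 2 < 1" using sx by (simp add: cos_squared_eq)
  then have "\<bar>cos x\<bar> < 1" by (simp add: abs_square_less_1)
  then have "\<bar>sin (2 * x)\<bar> < 2 * sin x" using sx
    by (simp add: sin_double abs_mult)
  then show ?case by simp
next
  case (step n)
  have sx: "sin x > 0" using x by (intro sin_gt_zero) auto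
  have "sin (real (Suc n) * x) = sin (real n * x) * cos x + cos (real n * x) * sin x"
    by (simp add: distrib_right sin_add)
  then have "\<bar>sin (real (Suc n) * x)\<bar> \<le> \<bar>sin (real n * x)\<bar> * \<bar>cos x\<bar> + \<bar>cos (real n * x)\<bar> * sin x"
    using sx abs_triangle_ineq[of "sin (real n * x) * cos x" "cos (real n * x) * sin x"]
    by (simp add: abs_mult)
  also have "\<dots> \<le> \<bar>sin (real n * x)\<bar> + sin x"
  proof (rule add_mono)
    show "\<bar>sin (real n * x)\<bar> * \<bar>cos x\<bar> \<le> \<bar>sin (real n * x)\<bar>"
      by (rule mult_left_le) (auto simp: abs_cos_le_one)
    show "\<bar>cos (real n * x)\<bar> * sin x \<le> sin x"
      by (rule mult_left_le_one_le) (use sx in \<open>auto simp: abs_cos_le_one\<close>)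
  qed
  also have "\<dots> < real (Suc n) * sin x" using step by (simp add: algebra_simps)
  finally show ?case .
qed

lemma lin_help: fixes D N S :: real shows "2*D = N - S \<Longrightarrow> \<bar>S\<bar> < N \<Longrightarrow> 0 < D"
  by linarith

lemma Rf_deriv_pos:
  assumes t: "t \<ge> 1" and x: "0 < x" "x \<le> pi / (2 * real t + 1)"
  shows "\<exists>y. ((Rf t) has_real_derivative y) (at x) \<and> 0 < y"
proof -
  note tf = theta_facts[OF t x]
  define A where "A = real t * x"
  define B where "B = real (t+1) * x"
  have sB: "sin B > 0" using tf(3) by (simp add: B_def)
  define Y where "Y = (real t * cos A * sin B - real (t+1) * sin A * cos B) / (sin B)^2"
  have "((\<lambda>x. sin (real t * x) / sin (real (t+1) * x)) has_real_derivative Y) (at x)"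
    unfolding Y_def A_def B_def using sB[unfolded B_def]
    by (auto intro!: derivative_eq_intros simp: power2_eq_square field_simps)
  moreover have "Y > 0"
  proof -
    have e: "2 * (real t * cos A * sin B - real (t+1) * sin A * cos B) = real (2*t+1) * sin x - sin (real (2*t+1) * x)"
    proof -
      have "x = B - A" by (simp add: A_def B_def algebra_simps)
      then have h1: "sin x = sin B * cos A - cos B * sin A" by (simp add: sin_diff)
      have "real (2*t+1) * x = A + B" by (simp add: A_def B_def algebra_simps)
      then have h2: "sin (real (2*t+1) * x) = sin A * cos B + cos A * sin B" by (simp add: sin_add)
      show ?thesis unfolding h1 h2 by (simp add: algebra_simps)
    qed
    have "x \<le> real t * x" using mult_right_mono[of 1 "real t" x] t x by simp
    then have xp: "x < pi" using tf(4) pi_gt_zero by linarith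
    have "\<bar>sin (real (2*t+1) * x)\<bar> < real (2*t+1) * sin x"
      by (rule abs_sin_mult_less[OF x(1) xp]) (use t in simp)
    then have "real t * cos A * sin B - real (t+1) * sin A * cos B > 0"
      by (rule lin_help[OF e])
    then show ?thesis unfolding Y_def using sB by simp
  qed
  ultimately show ?thesis unfolding Rf_def[abs_def] by (metis Rf_def)
qed

lemma Rf_mono:
  assumes t: "t \<ge> 1" and ab: "0 < a" "a < b" "b \<le> pi / (2 * real t + 1)"
  shows "Rf t a < Rf t b"
  by (rule DERIV_pos_imp_increasing[OF ab(2)]) (use ab in \<open>auto intro!: Rf_deriv_pos[OF t]\<close>)



lemma sin_k_over: "((\<lambda>y. sin (k*y) / y) \<longlongrightarrow> (k::real)) (at 0)"
proof -
  have "((\<lambda>y. sin (k*y)) has_field_derivative k) (at 0)"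
    by (auto intro!: derivative_eq_intros)
  then have "((\<lambda>y. (sin (k*y) - sin (k*0)) / (y - 0)) \<longlongrightarrow> k) (at 0)"
    by (simp only: has_field_derivative_iff)
  then show ?thesis by simp
qed

definition thmax :: "nat \<Rightarrow> real" where "thmax t = pi / (2 * real t + 1)"

lemma Lf_lim:
  assumes t: "t \<ge> 1"
  shows "(Lf t \<longlongrightarrow> c0 t) (at_right 0)"
proof -
  have l1: "((\<lambda>y. (sin (real t*y) / y)^t * (sin (1*y) / y) / (sin (real (t+1)*y) / y)^(t+1))
      \<longlongrightarrow> (real t)^t * 1 / (real (t+1))^(t+1)) (at_right 0)"
    by (intro tendsto_intros tendsto_mono[OF at_le sin_k_over]) auto
  have ev: "eventually (\<lambda>y. y \<in> {0<..<thmax t}) (at_right 0)"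
    unfolding thmax_def by (intro eventually_at_right_real) (auto simp: add_pos_nonneg)
  have "eventually (\<lambda>y. (sin (real t*y) / y)^t * (sin (1*y) / y) / (sin (real (t+1)*y) / y)^(t+1) = Lf t y) (at_right 0)"
    using ev
  proof eventually_elim
    case (elim y)
    then have y: "0 < y" "y \<le> pi / (2 * real t + 1)" by (auto simp: thmax_def)
    note tf = theta_facts[OF t y]
    show ?case unfolding Lf_def Rf_def using tf y
      by (simp add: power_divide field_simps power_add)
  qed
  from tendsto_cong[OF this] l1 have "(Lf t \<longlongrightarrow> (real t)^t * 1 / (real (t+1))^(t+1)) (at_right 0)"
    by simp
  then show ?thesis by (simp add: c0_def add.commute)
qed

lemma Lf_cont:
  assumes t: "t \<ge> 1" and ab: "0 < a" "b \<le> thmax t"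
  shows "continuous_on {a..b} (Lf t)"
proof -
  have nz: "\<And>x. x \<in> {a..b} \<Longrightarrow> sin (real (t+1) * x) \<noteq> 0"
  proof -
    fix x assume x: "x \<in> {a..b}"
    then have "0 < x" "x \<le> pi / (2 * real t + 1)" using ab by (auto simp: thmax_def)
    from theta_facts(3)[OF t this] show "sin (real (t+1) * x) \<noteq> 0" by simp
  qed
  show ?thesis unfolding Lf_def[abs_def] Rf_def
    by (intro continuous_intros) (use nz in auto)
qed

lemma Lf_thmax:
  assumes t: "t \<ge> 1"
  shows "Lf t (thmax t) = lambda_bar t"
proof -
  define h where "h = pi / 2 * (1 / (2 * real t + 1))"
  have th: "thmax t = 2 * h" by (simp add: thmax_def h_def field_simps)
  have e1: "real t * thmax t = pi / 2 - h" by (simp add: thmax_def h_def field_simps)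
  have e2: "real (t+1) * thmax t = pi / 2 + h" by (simp add: thmax_def h_def field_simps)
  have "cos h > 0"
  proof (rule cos_gt_zero_pi)
    show "- (pi/2) < h" by (simp add: h_def) (smt (verit) pi_gt_zero divide_pos_pos of_nat_0_le_iff)
    have lt1: "1/(2*real t+1) < 1" using t by simp
    show "h < pi/2" unfolding h_def using mult_strict_left_mono[OF lt1, of "pi/2"] by simp
  qed
  have s1: "sin (real t * thmax t) = cos h" by (simp add: e1 sin_cos_eq)
  have s2: "sin (real (t+1) * thmax t) = cos h" unfolding e2 by (simp add: sin_add)
  have "Lf t (thmax t) = sin (2*h) / cos h"
    unfolding Lf_def Rf_def s1 s2 th[symmetric] using \<open>cos h > 0\<close> by (simp add: th)
  also have "\<dots> = 2 * sin h" using \<open>cos h > 0\<close> by (simp add: sin_double)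
  finally show ?thesis by (simp add: lambda_bar_def h_def)
qed



lemma ev_small:
  assumes t: "t \<ge> 1" and lam: "c0 t < lam"
  shows "\<exists>e>0. \<forall>y. 0 < y \<and> y < e \<longrightarrow> Lf t y < lam"
proof -
  have "eventually (\<lambda>y. Lf t y < lam) (at_right 0)"
    using order_tendstoD(2)[OF Lf_lim[OF t] lam] .
  then obtain b where "b > 0" "\<And>y. y > 0 \<Longrightarrow> y < b \<Longrightarrow> Lf t y < lam"
    unfolding eventually_at_right[OF zero_less_one] by auto
  then show ?thesis by auto
qed

lemma thmax_pos: "thmax t > 0" by (simp add: thmax_def add_pos_nonneg)

lemma exists_theta:
  assumes t: "t \<ge> 1" and lam: "c0 t < lam" "lam < lambda_bar t"
  shows "\<exists>th. 0 < th \<and> th \<le> thmax t \<and> Lf t th = lam"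
proof -
  obtain e where e: "e > 0" "\<And>y. 0 < y \<Longrightarrow> y < e \<Longrightarrow> Lf t y < lam"
    using ev_small[OF t lam(1)] by auto
  define eps where "eps = min (e/2) (thmax t / 2)"
  have eps: "0 < eps" "eps < e" "eps < thmax t" using e thmax_pos[of t] by (auto simp: eps_def)
  have "\<exists>x\<ge>eps. x \<le> thmax t \<and> Lf t x = lam"
  proof (rule IVT')
    show "Lf t eps \<le> lam" using e(2)[OF eps(1,2)] by simp
    show "lam \<le> Lf t (thmax t)" using lam Lf_thmax[OF t] by simp
    show "eps \<le> thmax t" using eps by simp
    show "continuous_on {eps..thmax t} (Lf t)" by (rule Lf_cont[OF t eps(1) order.refl])
  qed
  then obtain x where "eps \<le> x" "x \<le> thmax t" "Lf t x = lam" by auto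
  then show ?thesis using eps by (intro exI[of _ x]) auto
qed

lemma regime2_mono:
  assumes t: "t \<ge> 1" and ab: "c0 t < a" "a < b" "b < lambda_bar t"
  shows "rho t a < rho t b"
proof -
  obtain tha where tha: "0 < tha" "tha \<le> thmax t" "Lf t tha = a"
    using exists_theta[OF t ab(1)] ab by force
  obtain thb where thb: "0 < thb" "thb \<le> thmax t" "Lf t thb = b"
    using exists_theta[OF t, of b] ab by force
  have ra: "rho t a = Rf t tha" using regime2_rho[OF t tha(1)] tha(2,3) by (simp add: thmax_def)
  have rb: "rho t b = Rf t thb" using regime2_rho[OF t thb(1)] thb(2,3) by (simp add: thmax_def)
  show ?thesis
  proof (rule ccontr)
    assume nl: "\<not> rho t a < rho t b"
    have "\<not> tha < thb"
    proof
      assume "tha < thb"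
      then have "Rf t tha < Rf t thb" using Rf_mono[OF t tha(1)] thb(2) by (simp add: thmax_def)
      then show False using nl ra rb by simp
    qed
    moreover have "tha \<noteq> thb" using tha thb ab by auto
    ultimately have lt: "thb < tha" by simp
    obtain e where e: "e > 0" "\<And>y. 0 < y \<Longrightarrow> y < e \<Longrightarrow> Lf t y < a"
      using ev_small[OF t ab(1)] by auto
    define eps where "eps = min (e/2) (thb / 2)"
    have eps: "0 < eps" "eps < e" "eps < thb" using e thb by (auto simp: eps_def)
    have "\<exists>x\<ge>eps. x \<le> thb \<and> Lf t x = a"
    proof (rule IVT')
      show "Lf t eps \<le> a" using e(2)[OF eps(1,2)] by simp
      show "a \<le> Lf t thb" using thb ab by simp
      show "eps \<le> thb" using eps by simp
      show "continuous_on {eps..thb} (Lf t)" by (rule Lf_cont[OF t eps(1) thb(2)])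
    qed
    then obtain th' where th': "eps \<le> th'" "th' \<le> thb" "Lf t th' = a" by auto
    have "rho t a = Rf t th'" using regime2_rho[OF t, of th'] th' eps thb(2) by (simp add: thmax_def)
    moreover have "Rf t th' < Rf t tha" using Rf_mono[OF t, of th' tha] th' eps lt tha(2)
      by (simp add: thmax_def)
    ultimately show False using ra by simp
  qed
qed

lemma sin_ge_half:
  assumes x: "0 \<le> x" "x \<le> pi/3"
  shows "x / 2 \<le> sin x"
proof (cases "x = 0")
  case True then show ?thesis by simp
next
  case False
  then have xp: "0 < x" using x by simp
  have "(\<lambda>y. sin y - y/2) 0 \<le> (\<lambda>y. sin y - y/2) x"
  proof (rule DERIV_nonneg_imp_increasing_open[of 0 x])
    show "0 \<le> x" using x by simp
    fix y assume y: "0 < y" "y < x"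
    have "((\<lambda>y. sin y - y/2) has_real_derivative (cos y - 1/2)) (at y)"
      by (auto intro!: derivative_eq_intros)
    moreover have "cos (pi/3) \<le> cos y" using y x by (intro cos_monotone_0_pi_le) auto
    then have "0 \<le> cos y - 1/2" by (simp add: cos_60)
    ultimately show "\<exists>d. ((\<lambda>y. sin y - y/2) has_real_derivative d) (at y) \<and> 0 \<le> d" by blast
  next
    show "continuous_on {0..x} (\<lambda>y. sin y - y/2)" by (intro continuous_intros) auto
  qed
  then show ?thesis by simp
qed

lemma c0_le_bar:
  assumes t: "t \<ge> 1"
  shows "c0 t \<le> lambda_bar t"
proof -
  have tp: "real t > 0" using t by simp
  have "1 + real t * (1 / real t) \<le> (1 + 1 / real t) ^ t"
  proof (rule Bernoulli_inequality)
    have "0 \<le> 1 / real t" using tp by simp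
    then show "- 1 \<le> 1 / real t" by linarith
  qed
  then have b: "2 \<le> ((real t + 1) / real t) ^ t" using tp by (simp add: field_simps)
  have "c0 t = (real t / (real t + 1)) ^ t / (real t + 1)"
    by (simp add: c0_def power_divide)
  also have "(real t / (real t + 1)) ^ t = 1 / ((real t + 1) / real t) ^ t"
    by (simp add: power_divide)
  also have "\<dots> \<le> 1 / 2" using b by (intro divide_left_mono) auto
  finally have c: "c0 t \<le> 1/2 / (real t + 1)"
    using tp by (simp add: divide_right_mono)
  define h where "h = pi / 2 * (1 / (2 * real t + 1))"
  have h0: "0 \<le> h" by (simp add: h_def)
  have "h \<le> pi / 2 * (1 / 3)" unfolding h_def using t by (intro mult_left_mono) (auto simp: field_simps)
  then have h1: "h \<le> pi / 3" using h0 by simp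
  have "h / 2 \<le> sin h" by (rule sin_ge_half[OF h0 h1])
  moreover have "lambda_bar t = 2 * sin h" by (simp add: lambda_bar_def h_def)
  ultimately have "h \<le> lambda_bar t" by linarith
  moreover have "1/2 / (real t + 1) \<le> h"
  proof -
    have "1/2 / (real t + 1) \<le> 1 / (2 * real t + 1)" using tp by (simp add: field_simps)
    also have "\<dots> \<le> pi / 2 * (1 / (2 * real t + 1))"
    proof -
      have p: "1 \<le> pi/2" using pi_ge_two by simp
      have "1 * (1/(2*real t+1)) \<le> pi/2 * (1/(2*real t+1))" by (rule mult_right_mono[OF p]) simp
      then show ?thesis by simp
    qed
    finally show ?thesis by (simp add: h_def)
  qed
  ultimately show ?thesis using c by linarith
qed



lemma sym_inner:
  fixes K :: "real^'n^'n"
  assumes "transpose K = K"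
  shows "(K *v x) \<bullet> y = x \<bullet> (K *v y)"
proof -
  have "x v* K = K *v x" using transpose_matrix_vector[of K x] assms by simp
  then show ?thesis using dot_lmul_matrix[of x K y] by simp
qed

lemma negmv: fixes K :: "real^'n^'m" shows "(- K) *v v = - (K *v v)"
proof -
  have "(- K) *v v = (0 - K) *v v" by simp
  also have "\<dots> = 0 *v v - K *v v" by (rule matrix_vector_mult_diff_rdistrib)
  finally show ?thesis by simp
qed

lemma quad_neg_help:
  fixes b c :: real assumes c: "c \<ge> 0" and b: "b > 0"
  shows "2 * (- b / (c+1)) * b + (- b / (c+1))^2 * c < 0"
proof -
  have cp: "c + 1 > 0" using c by simp
  define r where "r = b / (c+1)"
  have rp: "r > 0" using b cp by (simp add: r_def)
  have "c / (c+1) < 1" using cp by simp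
  then have "b * (c / (c+1)) < b * 1" using b by (intro mult_strict_left_mono) auto
  then have rc: "r * c < b" by (simp add: r_def)
  have "2 * (- b / (c+1)) * b + (- b / (c+1))^2 * c = r * (r * c - 2 * b)"
    by (simp add: r_def power2_eq_square algebra_simps)
  also have "\<dots> < 0" using rp rc b by (intro mult_pos_neg) auto
  finally show ?thesis .
qed

lemma rayleigh_eig:
  fixes K :: "real^'n^'n"
  assumes sym: "transpose K = K" and x: "norm x = 1"
    and mx: "\<And>y. norm y = 1 \<Longrightarrow> y \<bullet> (K *v y) \<le> x \<bullet> (K *v x)"
  shows "K *v x = (x \<bullet> (K *v x)) *\<^sub>R x"
proof -
  define mu where "mu = x \<bullet> (K *v x)"
  define A where "A = (\<lambda>y. mu *\<^sub>R y - K *v y)"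
  have Alin: "\<And>u v t. A (u + t *\<^sub>R v) = A u + t *\<^sub>R A v"
    by (simp add: A_def matrix_vector_right_distrib matrix_vector_mult_scaleR algebra_simps)
  have Ksym: "\<And>u v. u \<bullet> (K *v v) = v \<bullet> (K *v u)"
  proof -
    fix u v :: "real^'n"
    have "u \<bullet> (K *v v) = (K *v u) \<bullet> v" by (rule sym_inner[OF sym, symmetric])
    also have "\<dots> = v \<bullet> (K *v u)" by (rule inner_commute)
    finally show "u \<bullet> (K *v v) = v \<bullet> (K *v u)" .
  qed
  have Asym: "\<And>u v. u \<bullet> A v = v \<bullet> A u"
    unfolding A_def inner_diff_right inner_scaleR_right using Ksym by (simp add: inner_commute)
  have Apos: "\<And>y. y \<bullet> A y \<ge> 0"
  proof -
    fix y :: "real^'n"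
    show "y \<bullet> A y \<ge> 0"
    proof (cases "y = 0")
      case True then show ?thesis by (simp add: A_def)
    next
      case False
      define y' where "y' = (1 / norm y) *\<^sub>R y"
      have "norm y' = 1" using False by (simp add: y'_def)
      then have "y' \<bullet> (K *v y') \<le> mu" using mx by (simp add: mu_def)
      then have "(1 / norm y)^2 * (y \<bullet> (K *v y)) \<le> mu"
        by (simp add: y'_def matrix_vector_mult_scaleR power2_eq_square)
      then have "y \<bullet> (K *v y) \<le> mu * (norm y)^2"
        using False by (simp add: field_simps)
      then show ?thesis by (simp add: A_def inner_diff_right power2_norm_eq_inner)
    qed
  qed
  have xx: "x \<bullet> x = 1" using x by (simp add: power2_norm_eq_inner[symmetric])
  have Ax0: "x \<bullet> A x = 0" by (simp add: A_def inner_diff_right xx mu_def)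
  define w where "w = A x"
  have "w \<bullet> w = 0"
  proof (rule ccontr)
    assume "w \<bullet> w \<noteq> 0"
    then have bpos: "w \<bullet> w > 0" by (simp add: order_le_neq_trans)
    define c where "c = w \<bullet> A w"
    have c0: "c \<ge> 0" using Apos by (simp add: c_def)
    define t where "t = - (w \<bullet> w) / (c + 1)"
    have "(x + t *\<^sub>R w) \<bullet> A (x + t *\<^sub>R w) = 2 * t * (w \<bullet> w) + t^2 * c"
    proof -
      have "(x + t *\<^sub>R w) \<bullet> A (x + t *\<^sub>R w) = x \<bullet> A x + t * (x \<bullet> A w) + t * (w \<bullet> A x) + t * t * (w \<bullet> A w)"
        unfolding Alin by (simp add: inner_add_left inner_add_right algebra_simps)
      also have "x \<bullet> A w = w \<bullet> A x" by (rule Asym)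
      finally show ?thesis using Ax0 by (simp add: w_def[symmetric] c_def power2_eq_square)
    qed
    also have "\<dots> < 0" unfolding t_def by (rule quad_neg_help[OF c0 bpos])
    finally show False using Apos[of "x + t *\<^sub>R w"] by simp
  qed
  then have "w = 0" by simp
  then show ?thesis by (simp add: w_def A_def mu_def)
qed

lemma exists_max_sphere:
  fixes K :: "real^'n^'n"
  shows "\<exists>x. norm x = 1 \<and> (\<forall>y. norm y = 1 \<longrightarrow> y \<bullet> (K *v y) \<le> x \<bullet> (K *v x))"
proof -
  have ne: "sphere (0::real^'n) 1 \<noteq> {}" by simp
  have "continuous_on (sphere 0 1) (\<lambda>y::real^'n. y \<bullet> (K *v y))"
    by (intro continuous_intros matrix_vector_mult_linear_continuous_on[THEN continuous_on_subset]) auto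
  from continuous_attains_sup[OF compact_sphere ne this] show ?thesis by auto
qed

lemma nonzero_eig:
  fixes K :: "real^'n^'n"
  assumes sym: "transpose K = K" and nz: "\<exists>v. K *v v \<noteq> 0"
  shows "\<exists>l. l \<in> mat_spec K \<and> l \<noteq> 0"
proof (rule ccontr)
  assume H: "\<not> (\<exists>l. l \<in> mat_spec K \<and> l \<noteq> 0)"
  have eig: "\<And>M :: real^'n^'n. transpose M = M \<Longrightarrow> (\<And>l. l \<in> mat_spec M \<Longrightarrow> l = 0) \<Longrightarrow> \<forall>y. y \<bullet> (M *v y) \<le> 0"
  proof -
    fix M :: "real^'n^'n" assume sM: "transpose M = M" and z: "\<And>l. l \<in> mat_spec M \<Longrightarrow> l = 0"
    obtain x where x: "norm x = 1" "\<forall>y. norm y = 1 \<longrightarrow> y \<bullet> (M *v y) \<le> x \<bullet> (M *v x)"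
      using exists_max_sphere[of M] by auto
    have "M *v x = (x \<bullet> (M *v x)) *\<^sub>R x" by (rule rayleigh_eig[OF sM x(1)]) (use x(2) in auto)
    moreover have "x \<noteq> 0" using x by auto
    ultimately have "x \<bullet> (M *v x) \<in> mat_spec M" unfolding mat_spec_def by auto
    then have mu0: "x \<bullet> (M *v x) = 0" using z by auto
    show "\<forall>y. y \<bullet> (M *v y) \<le> 0"
    proof
      fix y :: "real^'n"
      show "y \<bullet> (M *v y) \<le> 0"
      proof (cases "y = 0")
        case True then show ?thesis by simp
      next
        case False
        define y' where "y' = (1 / norm y) *\<^sub>R y"
        have "norm y' = 1" using False by (simp add: y'_def)
        then have "y' \<bullet> (M *v y') \<le> 0" using x(2) mu0 by auto
        then have "(1 / norm y)^2 * (y \<bullet> (M *v y)) \<le> 0"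
          by (simp add: y'_def matrix_vector_mult_scaleR power2_eq_square)
        moreover have "(1 / norm y)^2 > 0" using False by simp
        ultimately show ?thesis by (simp add: mult_le_0_iff)
      qed
    qed
  qed
  have s1: "\<forall>y. y \<bullet> (K *v y) \<le> 0" using eig[OF sym] H by auto
  have symn: "transpose (- K) = - K" using sym transpose_scalar[of "-1" K] by simp
  have specn: "\<And>l. l \<in> mat_spec (- K) \<Longrightarrow> l = 0"
  proof -
    fix l assume "l \<in> mat_spec (- K)"
    then obtain v where "v \<noteq> 0" "(- K) *v v = l *\<^sub>R v" unfolding mat_spec_def by auto
    then have "K *v v = (- l) *\<^sub>R v"
      by (metis negmv minus_minus scaleR_minus_left)
    then have "- l \<in> mat_spec K" using \<open>v \<noteq> 0\<close> unfolding mat_spec_def by auto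
    then show "l = 0" using H by auto
  qed
  have s2: "\<forall>y. y \<bullet> ((- K) *v y) \<le> 0" using eig[OF symn specn] by auto
  have q0: "\<And>y. y \<bullet> (K *v y) = 0"
  proof -
    fix y have "0 \<le> y \<bullet> (K *v y)" using s2[rule_format, of y] by (simp add: negmv)
    then show "y \<bullet> (K *v y) = 0" using s1[rule_format, of y] by linarith
  qed
  have "\<And>v. K *v v = 0"
  proof -
    fix v :: "real^'n"
    define u where "u = K *v v"
    have "(u + v) \<bullet> (K *v (u + v)) = u \<bullet> (K *v u) + v \<bullet> (K *v v) + u \<bullet> (K *v v) + v \<bullet> (K *v u)"
      by (simp add: matrix_vector_right_distrib inner_add_left inner_add_right algebra_simps)
    moreover have "v \<bullet> (K *v u) = u \<bullet> (K *v v)"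
      using sym_inner[OF sym, of v u] by (simp add: inner_commute)
    ultimately have "2 * (u \<bullet> (K *v v)) = 0" using q0 by simp
    then have "u \<bullet> u = 0" by (simp add: u_def)
    then show "K *v v = 0" by (simp add: u_def)
  qed
  with nz show False by simp
qed



lemma finite_spec:
  fixes K :: "real^'n^'n"
  assumes sym: "transpose K = K"
  shows "finite (mat_spec K)"
proof -
  define ev where "ev l = (SOME v. v \<noteq> 0 \<and> K *v v = l *\<^sub>R v)" for l
  have ev: "\<And>l. l \<in> mat_spec K \<Longrightarrow> ev l \<noteq> 0 \<and> K *v ev l = l *\<^sub>R ev l"
    unfolding ev_def mat_spec_def by (rule someI_ex) auto
  have inj: "inj_on ev (mat_spec K)"
  proof (rule inj_onI)
    fix l1 l2 assume l: "l1 \<in> mat_spec K" "l2 \<in> mat_spec K" "ev l1 = ev l2"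
    then have "l1 *\<^sub>R ev l1 = l2 *\<^sub>R ev l1" using ev[OF l(1)] ev[OF l(2)] by metis
    then show "l1 = l2" using ev[OF l(1)] by simp
  qed
  have orth: "pairwise orthogonal (ev ` mat_spec K)"
  proof (rule pairwiseI)
    fix x y assume "x \<in> ev ` mat_spec K" "y \<in> ev ` mat_spec K" "x \<noteq> y"
    then obtain l1 l2 where l: "l1 \<in> mat_spec K" "l2 \<in> mat_spec K" "x = ev l1" "y = ev l2" "l1 \<noteq> l2"
      by auto
    have "l1 * (x \<bullet> y) = (K *v x) \<bullet> y" using ev[OF l(1)] l(3) by simp
    also have "\<dots> = x \<bullet> (K *v y)" by (rule sym_inner[OF sym])
    also have "\<dots> = l2 * (x \<bullet> y)" using ev[OF l(2)] l(4) by simp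
    finally have "(l1 - l2) * (x \<bullet> y) = 0" by (simp add: algebra_simps)
    then show "orthogonal x y" using l(5) by (simp add: orthogonal_def)
  qed
  have "0 \<notin> ev ` mat_spec K" using ev by force
  then have "independent (ev ` mat_spec K)" by (rule pairwise_orthogonal_independent[OF orth])
  then have "finite (ev ` mat_spec K)" by (rule finiteI_independent)
  then show ?thesis using inj by (rule finite_imageD)
qed

lemma quasi:
  assumes t: "t \<ge> 1" and x: "0 < a" "a \<le> x" "x \<le> b" "b < lambda_bar t"
  shows "rho t x \<le> max (rho t a) (rho t b)"
proof -
  consider "x = a" | "x = b" | "a < x \<and> x < b" using x by linarith
  then show ?thesis
  proof cases
    case 3
    consider "x < c0 t" | "x = c0 t" | "x > c0 t" by linarith
    then show ?thesis
    proof cases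
      case 1 then show ?thesis using regime1_mono[OF t x(1), of x] 3 by simp
    next
      case 2 then show ?thesis using regime1_mono[OF t x(1), of x] 3 by simp
    next
      case c: 3 then show ?thesis using regime2_mono[OF t c, of b] 3 x by simp
    qed
  qed simp_all
qed

theorem proposition2:
  fixes tau :: nat
  assumes "tau \<ge> 1"
  shows "(\<exists>lth. 0 \<le> lth \<and> lth \<le> lambda_bar tau
            \<and> (\<forall>a b. 0 < a \<and> a < b \<and> b < lth \<longrightarrow> rho tau b < rho tau a)
            \<and> (\<forall>a b. lth < a \<and> a < b \<and> b < lambda_bar tau \<longrightarrow> rho tau a < rho tau b))
      \<and> (\<forall>K :: real^'n^'n.
            CARD('n) \<ge> 2 \<and> transpose K = K \<and> 0 \<in> mat_spec K
            \<and> dim {v. K *v v = 0} = 1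
            \<and> mat_spec K \<subseteq> {0..<lambda_bar tau}
          \<longrightarrow> conv_rate tau K =
                max (rho tau (Min (mat_spec K - {0}))) (rho tau (Max (mat_spec K - {0}))))"
proof (intro conjI allI impI)
  note t = assms
  show "\<exists>lth. 0 \<le> lth \<and> lth \<le> lambda_bar tau
            \<and> (\<forall>a b. 0 < a \<and> a < b \<and> b < lth \<longrightarrow> rho tau b < rho tau a)
            \<and> (\<forall>a b. lth < a \<and> a < b \<and> b < lambda_bar tau \<longrightarrow> rho tau a < rho tau b)"
  proof (intro exI[of _ "c0 tau"] conjI allI impI)
    show "0 \<le> c0 tau" by (simp add: c0_def)
    show "c0 tau \<le> lambda_bar tau" by (rule c0_le_bar[OF t])
    fix a b
    show "0 < a \<and> a < b \<and> b < c0 tau \<Longrightarrow> rho tau b < rho tau a"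
      using regime1_mono[OF t] by auto
    show "c0 tau < a \<and> a < b \<and> b < lambda_bar tau \<Longrightarrow> rho tau a < rho tau b"
      using regime2_mono[OF t] by auto
  qed
next
  fix K :: "real^'n^'n"
  assume H: "CARD('n) \<ge> 2 \<and> transpose K = K \<and> 0 \<in> mat_spec K
            \<and> dim {v. K *v v = 0} = 1 \<and> mat_spec K \<subseteq> {0..<lambda_bar tau}"
  have sym: "transpose K = K" using H by simp
  have nz: "\<exists>v. K *v v \<noteq> 0"
  proof (rule ccontr)
    assume "\<not> (\<exists>v. K *v v \<noteq> 0)"
    then have "{v. K *v v = 0} = UNIV" by auto
    then have "dim {v. K *v v = 0} = CARD('n)" by (simp add: dim_UNIV)
    then show False using H by simp
  qed
  define S where "S = mat_spec K - {0}"
  have fin: "finite S" using finite_spec[OF sym] by (simp add: S_def)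
  have ne: "S \<noteq> {}" using nonzero_eig[OF sym nz] by (auto simp: S_def)
  have Ssub: "\<And>x. x \<in> S \<Longrightarrow> 0 < x \<and> x < lambda_bar tau"
    using H by (force simp: S_def)
  have minS: "Min S \<in> S" "Max S \<in> S" using fin ne by auto
  show "conv_rate tau K = max (rho tau (Min (mat_spec K - {0}))) (rho tau (Max (mat_spec K - {0})))"
    unfolding conv_rate_def S_def[symmetric]
  proof (rule antisym)
    show "Max (rho tau ` S) \<le> max (rho tau (Min S)) (rho tau (Max S))"
    proof (subst Max_le_iff)
      show "finite (rho tau ` S)" using fin by simp
      show "rho tau ` S \<noteq> {}" using ne by simp
      show "\<forall>a\<in>rho tau ` S. a \<le> max (rho tau (Min S)) (rho tau (Max S))"
      proof
        fix y assume "y \<in> rho tau ` S"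
        then obtain x where x: "x \<in> S" "y = rho tau x" by auto
        have "Min S \<le> x" "x \<le> Max S" using fin x(1) by auto
        then show "y \<le> max (rho tau (Min S)) (rho tau (Max S))"
          using quasi[OF assms, of "Min S" x "Max S"] Ssub[OF minS(1)] Ssub[OF minS(2)] x by simp
      qed
    qed
    show "max (rho tau (Min S)) (rho tau (Max S)) \<le> Max (rho tau ` S)"
      using fin minS by (auto intro: Max_ge)
  qed
qed


end
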